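(* Let $F\in\mathcal{P}$ with $K=\sup_{z\in\mathbb{D}}|\arg F(z)|<\frac{\pi}{2}$, and write $K=\arcsin\frac{2R}{1+R^2}$ with $0\le R<1$. If $\varphi$ is a Schwarz-type function with $\|\varphi\|_\infty\le\frac{1-R}{1+R}$, then $T_{F,\varphi}(f)\in\mathcal{P}$ for every $f\in\mathcal{P}$.
   Context: $\mathbb{D}$ is the open unit disk. $\mathcal{P}$ is the set of analytic $f$ on $\mathbb{D}$ with $\mathrm{Re}\,f>0$ and $f(0)=1$. A Schwarz-type function is an analytic $\varphi:\mathbb{D}\to\mathbb{D}$ with $\varphi(0)=0$. $\|\varphi\|_\infty=\sup_{z\in\mathbb{D}}|\varphi(z)|$. $\arg$ is the principal branch with values in $(-\pi,\pi]$. $T_{F,\varphi}(f)=F\cdot(f\circ\varphi)$. *)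

theory Defs
  imports "HOL-Complex_Analysis.Complex_Analysis"
begin

definition unit_disk :: "complex set" where
  "unit_disk = ball 0 1"

definition class_P :: "(complex \<Rightarrow> complex) set" where
  "class_P = {f. f holomorphic_on unit_disk \<and> (\<forall>z\<in>unit_disk. Re (f z) > 0) \<and> f 0 = 1}"

definition schwarz_type :: "(complex \<Rightarrow> complex) \<Rightarrow> bool" where
  "schwarz_type \<phi> \<longleftrightarrow> \<phi> holomorphic_on unit_disk \<and> \<phi> ` unit_disk \<subseteq> unit_disk \<and> \<phi> 0 = 0"

definition sup_norm :: "(complex \<Rightarrow> complex) \<Rightarrow> real" where
  "sup_norm \<phi> = (SUP z\<in>unit_disk. cmod (\<phi> z))"

definition T_op :: "(complex \<Rightarrow> complex) \<Rightarrow> (complex \<Rightarrow> complex) \<Rightarrow> (complex \<Rightarrow> complex) \<Rightarrow> (complex \<Rightarrow> complex)" where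
  "T_op F \<phi> f = (\<lambda>z. F z * f (\<phi> z))"

end

theory Submission
  imports Defs
begin

lemma arg_ineq:
  fixes w :: complex and R :: real
  assumes Rw: "Re w > 0" and R0: "0 \<le> R" and R1: "R < 1"
    and A: "\<bar>Arg w\<bar> \<le> arcsin (2 * R / (1 + R\<^sup>2))"
  shows "\<bar>Im w\<bar> * (1 - R\<^sup>2) \<le> 2 * R * Re w"
proof -
  define c where "c = 2 * R / (1 + R\<^sup>2)"
  define \<theta> where "\<theta> = Arg w"
  have w0: "w \<noteq> 0" using Rw by auto
  have weq: "w = of_real (cmod w) * exp (\<i> * of_real \<theta>)" using Arg_eq[OF w0] \<theta>_def by simp
  have ReW: "Re w = cmod w * cos \<theta>" and ImW: "Im w = cmod w * sin \<theta>"
    by (subst weq, simp add: Re_exp Im_exp)+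
  have c0: "0 \<le> c" using R0 by (simp add: c_def)
  have "(1 - R)\<^sup>2 > 0" using R1 by simp
  hence c1: "c < 1" using R0 by (simp add: c_def field_simps power2_eq_square)
  have as: "arcsin c \<le> pi/2" "0 \<le> arcsin c" using c0 c1 arcsin_ubound[of c] arcsin_le_arcsin[of 0 c] by auto
  have thab: "\<bar>\<theta>\<bar> \<le> arcsin c" using A by (simp add: \<theta>_def c_def)
  have "sin \<bar>\<theta>\<bar> \<le> sin (arcsin c)"
    using sin_monotone_2pi_le[of "\<bar>\<theta>\<bar>" "arcsin c"] thab as by simp
  moreover have "\<bar>\<theta>\<bar> \<le> pi" using thab as by linarith
  ultimately have s: "\<bar>sin \<theta>\<bar> \<le> c" using c0 c1 sin_ge_zero[of \<theta>] sin_ge_zero[of "-\<theta>"]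
    by (cases "\<theta> \<ge> 0") (auto simp: sin_minus)
  have "cos (arcsin c) \<le> cos \<bar>\<theta>\<bar>"
    using cos_monotone_0_pi_le[of "\<bar>\<theta>\<bar>" "arcsin c"] thab as by simp
  hence cc: "sqrt (1 - c\<^sup>2) \<le> cos \<theta>" using cos_arcsin[of c] c0 c1 by simp
  have "1 - c\<^sup>2 = ((1 - R\<^sup>2) / (1 + R\<^sup>2))\<^sup>2"
  proof -
    have d: "1 + R\<^sup>2 \<noteq> 0" by (metis add_pos_nonneg less_irrefl zero_le_power2 zero_less_one)
    have d2: "(1 + R\<^sup>2)\<^sup>2 \<noteq> 0" using d by simp
    have e: "(1 + R\<^sup>2)\<^sup>2 - (2*R)\<^sup>2 = (1 - R\<^sup>2)\<^sup>2" by (simp add: algebra_simps power2_eq_square)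
    have "1 - c\<^sup>2 = ((1 + R\<^sup>2)\<^sup>2 - (2*R)\<^sup>2) / (1 + R\<^sup>2)\<^sup>2"
      unfolding c_def power_divide using d2 by (simp add: diff_divide_distrib)
    then show ?thesis using e by (simp only: power_divide)
  qed
  moreover have "(1 - R\<^sup>2) / (1 + R\<^sup>2) \<ge> 0" using R0 R1
    by (simp add: abs_square_le_1 power_le_one)
  moreover have "0 \<le> 1 - R\<^sup>2" using R0 R1 by (simp add: power_le_one)
  ultimately have "sqrt (1 - c\<^sup>2) = (1 - R\<^sup>2) / (1 + R\<^sup>2)" by simp
  hence cc2: "(1 - R\<^sup>2) / (1 + R\<^sup>2) \<le> cos \<theta>" using cc by simp
  have nn: "0 \<le> cmod w" by simp
  have RR: "0 \<le> 1 - R\<^sup>2" using R0 R1 by (simp add: power_le_one)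
  have "\<bar>Im w\<bar> * (1 - R\<^sup>2) = cmod w * \<bar>sin \<theta>\<bar> * (1 - R\<^sup>2)" by (simp add: ImW abs_mult)
  also have "\<dots> \<le> cmod w * c * (1 - R\<^sup>2)"
    by (intro mult_right_mono mult_left_mono s nn RR)
  also have "\<dots> = 2 * R * (cmod w * ((1 - R\<^sup>2) / (1 + R\<^sup>2)))"
    by (simp add: c_def)
  also have "\<dots> \<le> 2 * R * (cmod w * cos \<theta>)"
    using R0 by (intro mult_left_mono cc2 nn) auto
  finally show ?thesis by (simp add: ReW)
qed

lemma norm_diff_lt_add:
  fixes a :: complex assumes "Re a > 0"
  shows "cmod (a - 1) < cmod (a + 1)"
proof -
  have "(cmod (a - 1))\<^sup>2 < (cmod (a + 1))\<^sup>2"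
    using assms by (simp only: cmod_power2) (simp add: power2_eq_square algebra_simps)
  then show ?thesis by (rule power_less_imp_less_base) simp
qed

lemma im_bound:
  fixes a :: complex
  shows "2 * \<bar>Im a\<bar> \<le> cmod (a + 1) * cmod (a - 1)"
proof -
  have e: "(cmod (a + 1) * cmod (a - 1))\<^sup>2 = ((Re a + 1)\<^sup>2 + (Im a)\<^sup>2) * ((Re a - 1)\<^sup>2 + (Im a)\<^sup>2)"
    by (simp add: power_mult_distrib cmod_power2)
  have "(2 * \<bar>Im a\<bar>)\<^sup>2 \<le> (cmod (a + 1) * cmod (a - 1))\<^sup>2"
  proof -
    have "((Re a + 1)\<^sup>2 + (Im a)\<^sup>2) * ((Re a - 1)\<^sup>2 + (Im a)\<^sup>2) - (2 * \<bar>Im a\<bar>)\<^sup>2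
          = ((Re a)\<^sup>2 + (Im a)\<^sup>2 - 1)\<^sup>2"
      by (simp add: power2_eq_square algebra_simps)
    then show ?thesis unfolding e by (metis diff_ge_0_iff_ge zero_le_power2)
  qed
  then show ?thesis by (rule power2_le_imp_le) simp
qed

lemma key:
  fixes Fz a :: complex and R :: real
  assumes RF: "Re Fz > 0" and IF: "\<bar>Im Fz\<bar> * (1 - R\<^sup>2) \<le> 2 * R * Re Fz"
    and Ra: "Re a > 0" and R0: "0 \<le> R" and R1: "R < 1"
    and PQ: "(1 + R) * cmod (a - 1) < (1 - R) * cmod (a + 1)"
  shows "Re (Fz * a) > 0"
proof -
  define P where "P = cmod (a + 1)"
  define Q where "Q = cmod (a - 1)"
  have P0: "P > 0" using Ra unfolding P_def
  proof -
    have "a + 1 \<noteq> 0" proof assume "a + 1 = 0" then have "Re (a + 1) = 0" by simp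
      with Ra show False by simp qed
    then show "0 < cmod (a + 1)" by simp
  qed
  have Q0: "Q \<ge> 0" by (simp add: Q_def)
  have PQ2: "P\<^sup>2 - Q\<^sup>2 = 4 * Re a"
    unfolding P_def Q_def by (simp only: cmod_power2) (simp add: power2_eq_square algebra_simps)
  have ImA: "2 * \<bar>Im a\<bar> \<le> P * Q" using im_bound[of a] by (simp add: P_def Q_def)
  have RR: "1 - R\<^sup>2 > 0" using R0 R1 by (simp add: abs_square_less_1)
  have f1: "(1 - R) * P - (1 + R) * Q > 0" using PQ by (simp add: P_def Q_def)
  have f2: "(1 + R) * P + (1 - R) * Q > 0" using P0 Q0 R0 R1
    by (simp add: add_pos_nonneg)
  have prod: "((1 - R) * P - (1 + R) * Q) * ((1 + R) * P + (1 - R) * Q) > 0"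
    using f1 f2 by simp
  have idt: "((1 - R) * P - (1 + R) * Q) * ((1 + R) * P + (1 - R) * Q)
      = (1 - R\<^sup>2) * (P\<^sup>2 - Q\<^sup>2) - 4 * R * P * Q"
    by (simp add: power2_eq_square algebra_simps)
  have "(1 - R\<^sup>2) * (\<bar>Im Fz\<bar> * \<bar>Im a\<bar>) \<le> 2 * R * Re Fz * \<bar>Im a\<bar>"
    using IF by (metis abs_ge_zero mult.commute mult.left_commute mult_right_mono)
  also have "\<dots> = R * Re Fz * (2 * \<bar>Im a\<bar>)" by simp
  also have "\<dots> \<le> R * Re Fz * (P * Q)"
    using ImA R0 RF by (intro mult_left_mono) auto
  finally have A: "(1 - R\<^sup>2) * (\<bar>Im Fz\<bar> * \<bar>Im a\<bar>) \<le> R * Re Fz * (P * Q)" .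
  have B: "Re Fz * ((1 - R\<^sup>2) * (P\<^sup>2 - Q\<^sup>2) - 4 * R * P * Q) > 0"
    using RF prod idt by simp
  have "(1 - R\<^sup>2) * Re (Fz * a) = (1 - R\<^sup>2) * (Re Fz * Re a) - (1 - R\<^sup>2) * (Im Fz * Im a)"
    by (simp add: algebra_simps)
  also have "\<dots> \<ge> (1 - R\<^sup>2) * (Re Fz * Re a) - (1 - R\<^sup>2) * (\<bar>Im Fz\<bar> * \<bar>Im a\<bar>)"
    using RR by (simp add: abs_mult[symmetric] abs_ge_self)
  finally have C: "(1 - R\<^sup>2) * Re (Fz * a) \<ge> (1 - R\<^sup>2) * (Re Fz * Re a) - R * Re Fz * (P * Q)"
    using A by linarith
  have "4 * ((1 - R\<^sup>2) * (Re Fz * Re a) - R * Re Fz * (P * Q)) =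
      Re Fz * ((1 - R\<^sup>2) * (P\<^sup>2 - Q\<^sup>2) - 4 * R * P * Q)"
    using PQ2 by (simp add: algebra_simps)
  with B have "0 < 4 * ((1 - R\<^sup>2) * (Re Fz * Re a) - R * Re Fz * (P * Q))" by simp
  hence "0 < (1 - R\<^sup>2) * (Re Fz * Re a) - R * Re Fz * (P * Q)" by simp
  with C have "(1 - R\<^sup>2) * Re (Fz * a) > 0" by (meson less_le_trans)
  with RR show ?thesis by (simp add: zero_less_mult_iff)
qed

lemma P_schwarz:
  assumes f: "f \<in> class_P" and w: "cmod w < 1"
  shows "cmod (f w - 1) \<le> cmod w * cmod (f w + 1)"
proof -
  define g where "g = (\<lambda>w. (f w - 1) / (f w + 1))"
  have hol: "f holomorphic_on ball 0 1" and pos: "\<And>z. cmod z < 1 \<Longrightarrow> Re (f z) > 0" and f0: "f 0 = 1"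
    using f by (auto simp: class_P_def unit_disk_def)
  have nz: "f z + 1 \<noteq> 0" if "cmod z < 1" for z
  proof
    assume "f z + 1 = 0" then have "Re (f z + 1) = 0" by simp
    with pos[OF that] show False by simp
  qed
  have "g holomorphic_on ball 0 1" unfolding g_def
    using nz by (intro holomorphic_intros hol) auto
  moreover have "g 0 = 0" by (simp add: g_def f0)
  moreover have "cmod (g z) < 1" if "cmod z < 1" for z
    using norm_diff_lt_add[OF pos[OF that]] nz[OF that] by (simp add: g_def norm_divide)
  ultimately have "cmod (g w) \<le> cmod w" using Schwarz_Lemma(1) w by blast
  then show ?thesis using nz[OF w] by (simp add: g_def norm_divide divide_le_eq)
qed

lemma phi_strict:
  assumes sp: "schwarz_type \<phi>" and sn: "sup_norm \<phi> \<le> r" and r: "r > 0" and z: "cmod z < 1"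
  shows "cmod (\<phi> z) < r"
proof -
  have hol: "\<phi> holomorphic_on ball 0 1" and im: "\<And>z. cmod z < 1 \<Longrightarrow> cmod (\<phi> z) < 1" and p0: "\<phi> 0 = 0"
    using sp by (auto simp: schwarz_type_def unit_disk_def image_subset_iff)
  have le: "cmod (\<phi> x) \<le> r" if "cmod x < 1" for x
  proof -
    have "cmod (\<phi> x) \<le> sup_norm \<phi>" unfolding sup_norm_def
      by (rule cSUP_upper) (use that im in \<open>auto simp: unit_disk_def bdd_above_def intro!: exI[of _ 1] less_imp_le\<close>)
    with sn show ?thesis by simp
  qed
  show ?thesis
  proof (cases "z = 0")
    case True then show ?thesis using p0 r by simp
  next
    case False
    define s where "s = (r + r / cmod z) / 2"
    have nz: "cmod z > 0" using False by simp
    have rz: "r < r / cmod z" using z nz r by (simp add: less_divide_eq)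
    have s: "r < s" using rz by (simp add: s_def)
    have "(\<lambda>x. \<phi> x / of_real s) holomorphic_on ball 0 1" by (intro holomorphic_intros hol) (use s r in auto)
    moreover have "(\<lambda>x. \<phi> x / of_real s) 0 = 0" by (simp add: p0)
    moreover have "cmod (\<phi> x / of_real s) < 1" if "cmod x < 1" for x
      using le[OF that] s r by (simp add: norm_divide divide_less_eq)
    ultimately have "cmod (\<phi> z / of_real s) \<le> cmod z" using Schwarz_Lemma(1)[of "\<lambda>x. \<phi> x / of_real s" z] z by blast
    hence "cmod (\<phi> z) \<le> s * cmod z" using s r by (simp add: norm_divide divide_le_eq mult.commute)
    also have "\<dots> = (r * cmod z + r) / 2" using nz by (simp add: s_def field_simps)
    also have "\<dots> < r" using z r by (simp add: mult_less_cancel_left1 [symmetric])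
    finally show ?thesis .
  qed
qed

theorem proposition3p5:
  fixes F \<phi> :: "complex \<Rightarrow> complex" and R :: real
  assumes "F \<in> class_P"
    and "(SUP z\<in>unit_disk. \<bar>Arg (F z)\<bar>) < pi / 2"
    and "0 \<le> R" and "R < 1"
    and "(SUP z\<in>unit_disk. \<bar>Arg (F z)\<bar>) = arcsin (2 * R / (1 + R\<^sup>2))"
    and "schwarz_type \<phi>"
    and "sup_norm \<phi> \<le> (1 - R) / (1 + R)"
  shows "\<forall>f\<in>class_P. T_op F \<phi> f \<in> class_P"
proof
  fix f assume f: "f \<in> class_P"
  note FP = assms(1) and R0 = assms(3) and R1 = assms(4) and K = assms(5) and sp = assms(6) and sn = assms(7)
  define r where "r = (1 - R) / (1 + R)"
  have r0: "r > 0" using R0 R1 by (simp add: r_def)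
  have Fh: "F holomorphic_on unit_disk" and FRe: "\<And>z. z \<in> unit_disk \<Longrightarrow> Re (F z) > 0" and F0: "F 0 = 1"
    using FP by (auto simp: class_P_def)
  have fh: "f holomorphic_on unit_disk" and fRe: "\<And>z. z \<in> unit_disk \<Longrightarrow> Re (f z) > 0" and f0: "f 0 = 1"
    using f by (auto simp: class_P_def)
  have ph: "\<phi> holomorphic_on unit_disk" and pim: "\<phi> ` unit_disk \<subseteq> unit_disk" and p0: "\<phi> 0 = 0"
    using sp by (auto simp: schwarz_type_def)
  have "T_op F \<phi> f holomorphic_on unit_disk" unfolding T_op_def
    by (intro holomorphic_intros Fh holomorphic_on_compose_gen[OF ph fh pim, unfolded o_def])
  moreover have "T_op F \<phi> f 0 = 1" by (simp add: T_op_def F0 p0 f0)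
  moreover have "Re (T_op F \<phi> f z) > 0" if z: "z \<in> unit_disk" for z
  proof -
    have bd: "bdd_above ((\<lambda>z. \<bar>Arg (F z)\<bar>) ` unit_disk)"
    proof (rule bdd_aboveI2)
      fix x show "\<bar>Arg (F x)\<bar> \<le> pi" using mpi_less_Arg[of "F x"] Arg_le_pi[of "F x"] by linarith
    qed
    have "\<bar>Arg (F z)\<bar> \<le> (SUP z\<in>unit_disk. \<bar>Arg (F z)\<bar>)"
      by (rule cSUP_upper[OF z bd])
    hence A: "\<bar>Arg (F z)\<bar> \<le> arcsin (2 * R / (1 + R\<^sup>2))" using K by simp
    have IF: "\<bar>Im (F z)\<bar> * (1 - R\<^sup>2) \<le> 2 * R * Re (F z)" by (rule arg_ineq[OF FRe[OF z] R0 R1 A])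
    define w where "w = \<phi> z"
    have zn: "cmod z < 1" using z by (simp add: unit_disk_def)
    have wr: "cmod w < r" unfolding w_def by (rule phi_strict[OF sp _ r0 zn]) (use sn in \<open>simp add: r_def\<close>)
    have wd: "w \<in> unit_disk" using pim z by (auto simp: w_def)
    hence wn: "cmod w < 1" by (simp add: unit_disk_def)
    have Sw: "cmod (f w - 1) \<le> cmod w * cmod (f w + 1)" by (rule P_schwarz[OF f wn])
    have pos1: "cmod (f w + 1) > 0"
    proof -
      have "f w + 1 \<noteq> 0" proof assume "f w + 1 = 0" then have "Re (f w + 1) = 0" by simp
        with fRe[OF wd] show False by simp qed
      then show ?thesis by simp
    qed
    have "(1 + R) * cmod (f w - 1) \<le> (1 + R) * (cmod w * cmod (f w + 1))"
      using Sw R0 by (intro mult_left_mono) auto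
    also have "\<dots> < (1 + R) * (r * cmod (f w + 1))"
      using wr pos1 R0 by (intro mult_strict_left_mono mult_strict_right_mono) auto
    also have "\<dots> = (1 - R) * cmod (f w + 1)" using R0 by (simp add: r_def)
    finally have PQ: "(1 + R) * cmod (f w - 1) < (1 - R) * cmod (f w + 1)" .
    show ?thesis using key[OF FRe[OF z] IF fRe[OF wd] R0 R1 PQ] by (simp add: T_op_def w_def)
  qed
  ultimately show "T_op F \<phi> f \<in> class_P" by (simp add: class_P_def)
qed

end
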